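(* Let $a<b$, $\ell_3>0$, $R>0$ and $\epsilon=1/R$. Let $U(y,z)$ be a smooth real-valued function on $[a,b]\times\mathbb{R}$, $\ell_3$-periodic in $z$, and let $g=\max\{\|U_y\|_{L^\infty},\|U_z\|_{L^\infty}\}$. Let $k>0$ and $c=c_r+ic_i\in\mathbb{C}$, and suppose there are smooth functions $u,v,w,p$ on $[a,b]\times\mathbb{R}$, $\ell_3$-periodic in $z$, with $(u,v,w)$ not identically zero, such that \[ ik(U-c)u+vU_y+wU_z=-ikp+\epsilon(\Delta-k^2)u,\quad ik(U-c)v=-p_y+\epsilon(\Delta-k^2)v, \] \[ ik(U-c)w=-p_z+\epsilon(\Delta-k^2)w,\quad iku+v_y+w_z=0, \] with $u=v=w=0$ at $y=a$ and $y=b$. If $Rg<\min(k,k^3)$, then $c_i<0$ (the eigenvalue is stable).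
   Context: Here $\Delta=\partial_y^2+\partial_z^2$. The system is the linearized Navier–Stokes operator (Reynolds number $R$, no-slip walls at $y=a,b$, periodic in $x$ and $z$) about the shear $(U(y,z),0,0)$, for perturbations of the form $e^{ik(x-ct)}(u,v,w,p)(y,z)+\text{c.c.}$; $(k,c)$ is then called an eigenmode. *)

theory Defs
  imports "HOL-Analysis.Analysis"
begin

definition strip :: "real \<Rightarrow> real \<Rightarrow> (real \<times> real) set" where
  "strip a b = {a..b} \<times> UNIV"

definition Dy :: "real \<Rightarrow> real \<Rightarrow> (real \<times> real \<Rightarrow> 'v::real_normed_vector) \<Rightarrow> real \<times> real \<Rightarrow> 'v" where
  "Dy a b f p = vector_derivative (\<lambda>t. f (t, snd p)) (at (fst p) within {a..b})"

definition Dz :: "(real \<times> real \<Rightarrow> 'v::real_normed_vector) \<Rightarrow> real \<times> real \<Rightarrow> 'v" where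
  "Dz f p = vector_derivative (\<lambda>t. f (fst p, t)) (at (snd p))"

text \<open>Smooth (C-infinity up to the boundary) on the closed strip: continuous,
  (Frechet) differentiable, and both partial derivatives again smooth.\<close>
coinductive smooth_strip :: "real \<Rightarrow> real \<Rightarrow> (real \<times> real \<Rightarrow> 'v::real_normed_vector) \<Rightarrow> bool"
  for a b where
  "\<lbrakk> continuous_on (strip a b) f;
     \<forall>p\<in>strip a b. f differentiable (at p within strip a b);
     smooth_strip a b (Dy a b f); smooth_strip a b (Dz f) \<rbrakk> \<Longrightarrow> smooth_strip a b f"

definition periodic_z :: "real \<Rightarrow> real \<Rightarrow> real \<Rightarrow> (real \<times> real \<Rightarrow> 'v) \<Rightarrow> bool" where
  "periodic_z a b l f \<longleftrightarrow> (\<forall>y\<in>{a..b}. \<forall>z. f (y, z + l) = f (y, z))"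

definition Lap :: "real \<Rightarrow> real \<Rightarrow> (real \<times> real \<Rightarrow> complex) \<Rightarrow> real \<times> real \<Rightarrow> complex" where
  "Lap a b f p = Dy a b (Dy a b f) p + Dz (Dz f) p"

end

theory Submission
  imports Defs
begin


lemma smooth_cont: "smooth_strip a b f \<Longrightarrow> continuous_on (strip a b) f"
  by (erule smooth_strip.cases) auto
lemma smooth_Dy: "smooth_strip a b f \<Longrightarrow> smooth_strip a b (Dy a b f)"
  by (erule smooth_strip.cases) auto
lemma smooth_Dz: "smooth_strip a b f \<Longrightarrow> smooth_strip a b (Dz f)"
  by (erule smooth_strip.cases) auto
lemma smooth_diff: "smooth_strip a b f \<Longrightarrow> p \<in> strip a b \<Longrightarrow> f differentiable (at p within strip a b)"
  by (erule smooth_strip.cases) auto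

lemma hasDy:
  assumes f: "smooth_strip a b f" and t: "t \<in> {a..b}"
  shows "((\<lambda>s. f (s, z)) has_vector_derivative Dy a b f (t, z)) (at t within {a..b})"
proof -
  have d1: "(\<lambda>s. (s, z)) differentiable (at t within {a..b})"
    by (intro derivative_intros)
  have "(\<lambda>s. (s, z)) ` {a..b} \<subseteq> strip a b" by (auto simp: strip_def)
  moreover have "f differentiable (at (t, z) within strip a b)"
    using smooth_diff[OF f] t by (auto simp: strip_def)
  ultimately have "f differentiable (at ((\<lambda>s. (s, z)) t) within (\<lambda>s. (s, z)) ` {a..b})"
    using differentiable_within_subset by fastforce
  from differentiable_chain_within[OF d1 this]
  have "(\<lambda>s. f (s, z)) differentiable (at t within {a..b})" by (simp add: o_def)
  from vector_derivative_works[THEN iffD1, OF this] show ?thesis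
    by (simp add: Dy_def)
qed

lemma hasDz:
  assumes f: "smooth_strip a b f" and y: "y \<in> {a..b}"
  shows "((\<lambda>s. f (y, s)) has_vector_derivative Dz f (y, t)) (at t)"
proof -
  have d1: "(\<lambda>s. (y, s)) differentiable (at t within UNIV)"
    by (intro derivative_intros)
  have "(\<lambda>s. (y, s)) ` UNIV \<subseteq> strip a b" using y by (auto simp: strip_def)
  moreover have "f differentiable (at (y, t) within strip a b)"
    using smooth_diff[OF f] y by (auto simp: strip_def)
  ultimately have "f differentiable (at ((\<lambda>s. (y, s)) t) within (\<lambda>s. (y, s)) ` UNIV)"
    using differentiable_within_subset by fastforce
  from differentiable_chain_within[OF d1 this]
  have "(\<lambda>s. f (y, s)) differentiable (at t)" by (simp add: o_def)
  from vector_derivative_works[THEN iffD1, OF this] show ?thesis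
    by (simp add: Dz_def)
qed

lemma per_Dz:
  assumes f: "smooth_strip a b f" and p: "periodic_z a b l f"
  shows "periodic_z a b l (Dz f)"
  unfolding periodic_z_def
proof (intro ballI allI)
  fix y z assume y: "y \<in> {a..b}"
  have h1: "((\<lambda>s. f (y, s)) has_vector_derivative Dz f (y, z + l)) (at (z + l))"
    using hasDz[OF f y] .
  have h2: "((\<lambda>s. s + l) has_vector_derivative 1) (at z)"
    by (auto intro!: derivative_eq_intros)
  from vector_diff_chain_at[OF h2, of "\<lambda>s. f (y, s)", simplified, OF h1]
  have "((\<lambda>s. f (y, s + l)) has_vector_derivative Dz f (y, z + l)) (at z)"
    by (simp add: o_def)
  moreover have "(\<lambda>s. f (y, s + l)) = (\<lambda>s. f (y, s))"
    using p y by (auto simp: periodic_z_def)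
  ultimately have "((\<lambda>s. f (y, s)) has_vector_derivative Dz f (y, z + l)) (at z)" by simp
  from vector_derivative_unique_at[OF this hasDz[OF f y]]
  show "Dz f (y, z + l) = Dz f (y, z)" .
qed

lemma per_Dy:
  assumes ab: "a < b" and f: "smooth_strip a b f" and p: "periodic_z a b l f"
  shows "periodic_z a b l (Dy a b f)"
  unfolding periodic_z_def
proof (intro ballI allI)
  fix y z assume y: "y \<in> {a..b}"
  have h1: "((\<lambda>s. f (s, z + l)) has_vector_derivative Dy a b f (y, z + l)) (at y within {a..b})"
    using hasDy[OF f y] .
  have "((\<lambda>s. f (s, z)) has_vector_derivative Dy a b f (y, z + l)) (at y within {a..b})"
    using has_vector_derivative_transform[OF y _ h1, of "\<lambda>s. f (s, z)"] p
    by (auto simp: periodic_z_def)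
  from vector_derivative_unique_within_closed_interval[unfolded cbox_interval, OF ab y this hasDy[OF f y]]
  show "Dy a b f (y, z + l) = Dy a b f (y, z)" .
qed



lemma rect_sub: "cbox (a,0) (b,l) \<subseteq> strip a b"
  by (auto simp: strip_def cbox_Pair_iff[symmetric] cbox_interval)

lemma cont_rect: "continuous_on (strip a b) F \<Longrightarrow> continuous_on (cbox (a,0) (b,l)) F"
  using continuous_on_subset rect_sub by blast

lemma cont_line_y: "continuous_on (strip a b) F \<Longrightarrow> continuous_on {a..b} (\<lambda>t. F (t, z))"
  apply (rule continuous_on_compose2[of "strip a b" F])
  by (auto simp: strip_def intro!: continuous_intros)

lemma cont_line_z: "continuous_on (strip a b) F \<Longrightarrow> y \<in> {a..b} \<Longrightarrow> continuous_on S (\<lambda>s. F (y, s))"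
  apply (rule continuous_on_compose2[of "strip a b" F])
  by (auto simp: strip_def intro!: continuous_intros)

lemma swap_int:
  assumes "continuous_on (strip a b) (F :: real \<times> real \<Rightarrow> complex)"
  shows "integral (cbox (a,0) (b,l)) F = integral {0..l} (\<lambda>z. integral {a..b} (\<lambda>t. F (t, z)))"
proof -
  have c: "continuous_on (cbox (a,0) (b,l)) F" using cont_rect[OF assms] .
  have "integral (cbox (a,0) (b,l)) F = integral (cbox a b) (\<lambda>x. integral (cbox 0 l) (\<lambda>y. F (x, y)))"
    using integral_prod_continuous[OF c] .
  also have "\<dots> = integral (cbox 0 l) (\<lambda>y. integral (cbox a b) (\<lambda>x. F (x, y)))"
    using integral_swap_continuous[of a 0 b l "\<lambda>x y. F (x, y)"] c by simp
  finally show ?thesis by (simp add: cbox_interval)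
qed

lemma fubini_int:
  assumes "continuous_on (strip a b) (F :: real \<times> real \<Rightarrow> complex)"
  shows "integral (cbox (a,0) (b,l)) F = integral {a..b} (\<lambda>y. integral {0..l} (\<lambda>z. F (y, z)))"
  using integral_prod_continuous[OF cont_rect[OF assms]] by (simp add: cbox_interval)

lemma ibp_y:
  fixes f g :: "real \<times> real \<Rightarrow> complex"
  assumes f: "smooth_strip a b f" and g: "smooth_strip a b g" and ab: "a \<le> b"
    and bca: "\<And>z. g (a, z) = 0" and bcb: "\<And>z. g (b, z) = 0"
  shows "integral (cbox (a,0) (b,l)) (\<lambda>q. Dy a b f q * cnj (g q))
       = - integral (cbox (a,0) (b,l)) (\<lambda>q. f q * cnj (Dy a b g q))"
proof -
  have cf: "continuous_on (strip a b) f" and cg: "continuous_on (strip a b) g"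
    and cdf: "continuous_on (strip a b) (Dy a b f)" and cdg: "continuous_on (strip a b) (Dy a b g)"
    by (simp_all add: smooth_cont smooth_Dy f g)
  have c1: "continuous_on (strip a b) (\<lambda>q. Dy a b f q * cnj (g q))"
    using cdf cg by (intro continuous_intros)
  have c2: "continuous_on (strip a b) (\<lambda>q. f q * cnj (Dy a b g q))"
    using cf cdg by (intro continuous_intros)
  have inner: "integral {a..b} (\<lambda>t. Dy a b f (t, z) * cnj (g (t, z)))
      = - integral {a..b} (\<lambda>t. f (t, z) * cnj (Dy a b g (t, z)))" for z
  proof -
    have "((\<lambda>t. Dy a b f (t, z) * cnj (g (t, z)) + f (t, z) * cnj (Dy a b g (t, z))) has_integral
        (f (b, z) * cnj (g (b, z)) - f (a, z) * cnj (g (a, z)))) {a..b}"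
    proof (rule fundamental_theorem_of_calculus[OF ab])
      fix t assume t: "t \<in> {a..b}"
      show "((\<lambda>t. f (t, z) * cnj (g (t, z))) has_vector_derivative
          Dy a b f (t, z) * cnj (g (t, z)) + f (t, z) * cnj (Dy a b g (t, z))) (at t within {a..b})"
        using has_vector_derivative_mult[OF hasDy[OF f t, where z=z] has_vector_derivative_cnj[OF hasDy[OF g t, where z=z]]]
        by (simp add: add.commute)
    qed
    hence h: "((\<lambda>t. Dy a b f (t, z) * cnj (g (t, z)) + f (t, z) * cnj (Dy a b g (t, z))) has_integral 0) {a..b}"
      using bca bcb by simp
    have i2: "((\<lambda>t. f (t, z) * cnj (Dy a b g (t, z))) has_integral integral {a..b} (\<lambda>t. f (t, z) * cnj (Dy a b g (t, z)))) {a..b}"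
      using integrable_continuous_interval[OF cont_line_y[OF c2]] by (simp add: integrable_integral)
    from has_integral_diff[OF h i2] show ?thesis by (simp add: integral_unique)
  qed
  show ?thesis
    by (simp add: swap_int[OF c1] swap_int[OF c2] inner integral_neg)
qed

lemma ibp_z:
  fixes f g :: "real \<times> real \<Rightarrow> complex"
  assumes f: "smooth_strip a b f" and g: "smooth_strip a b g" and l: "0 \<le> l"
    and pf: "periodic_z a b l f" and pg: "periodic_z a b l g"
  shows "integral (cbox (a,0) (b,l)) (\<lambda>q. Dz f q * cnj (g q))
       = - integral (cbox (a,0) (b,l)) (\<lambda>q. f q * cnj (Dz g q))"
proof -
  have cf: "continuous_on (strip a b) f" and cg: "continuous_on (strip a b) g"
    and cdf: "continuous_on (strip a b) (Dz f)" and cdg: "continuous_on (strip a b) (Dz g)"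
    by (simp_all add: smooth_cont smooth_Dz f g)
  have c1: "continuous_on (strip a b) (\<lambda>q. Dz f q * cnj (g q))"
    using cdf cg by (intro continuous_intros)
  have c2: "continuous_on (strip a b) (\<lambda>q. f q * cnj (Dz g q))"
    using cf cdg by (intro continuous_intros)
  have inner: "integral {0..l} (\<lambda>t. Dz f (y, t) * cnj (g (y, t)))
      = - integral {0..l} (\<lambda>t. f (y, t) * cnj (Dz g (y, t)))" if y: "y \<in> {a..b}" for y
  proof -
    have "((\<lambda>t. Dz f (y, t) * cnj (g (y, t)) + f (y, t) * cnj (Dz g (y, t))) has_integral
        (f (y, l) * cnj (g (y, l)) - f (y, 0) * cnj (g (y, 0)))) {0..l}"
    proof (rule fundamental_theorem_of_calculus[OF l])
      fix t assume t: "t \<in> {0..l}"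
      show "((\<lambda>t. f (y, t) * cnj (g (y, t))) has_vector_derivative
          Dz f (y, t) * cnj (g (y, t)) + f (y, t) * cnj (Dz g (y, t))) (at t within {0..l})"
        using has_vector_derivative_mult[OF hasDz[OF f y, where t=t] has_vector_derivative_cnj[OF hasDz[OF g y, where t=t]]]
        by (simp add: has_vector_derivative_at_within add.commute)
    qed
    moreover have "f (y, l) = f (y, 0)" "g (y, l) = g (y, 0)"
      using pf pg y unfolding periodic_z_def by (metis add_0)+
    ultimately have h: "((\<lambda>t. Dz f (y, t) * cnj (g (y, t)) + f (y, t) * cnj (Dz g (y, t))) has_integral 0) {0..l}"
      by simp
    have i2: "((\<lambda>t. f (y, t) * cnj (Dz g (y, t))) has_integral integral {0..l} (\<lambda>t. f (y, t) * cnj (Dz g (y, t)))) {0..l}"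
      using integrable_continuous_interval[OF cont_line_z[OF c2 y]] by (simp add: integrable_integral)
    from has_integral_diff[OF h i2] show ?thesis by (simp add: integral_unique)
  qed
  show ?thesis
    unfolding fubini_int[OF c1] fubini_int[OF c2] integral_neg[symmetric]
    by (rule integral_cong) (simp add: inner)
qed



lemma Re_integral: "f integrable_on S \<Longrightarrow> Re (integral S f) = integral S (\<lambda>x. Re (f x))"
  by (rule integral_unique[OF has_integral_Re[OF integrable_integral], symmetric])

lemma re_int_nonneg:
  assumes "continuous_on (strip a b) (h :: real \<times> real \<Rightarrow> complex)"
  shows "0 \<le> Re (integral (cbox (a,0) (b,l)) (\<lambda>q. h q * cnj (h q)))"
proof -
  have c: "continuous_on (cbox (a,0) (b,l)) (\<lambda>q. h q * cnj (h q))"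
    using cont_rect[OF assms] by (intro continuous_intros)
  have c': "continuous_on (cbox (a,0) (b,l)) (\<lambda>q. Re (h q * cnj (h q)))"
    using cont_rect[OF assms] by (intro continuous_intros)
  show ?thesis
    unfolding Re_integral[OF integrable_continuous[OF c]]
    by (rule integral_nonneg[OF integrable_continuous[OF c']]) simp
qed

lemma lap_lemma:
  fixes f :: "real \<times> real \<Rightarrow> complex"
  assumes f: "smooth_strip a b f" and ab: "a \<le> b" and l: "0 \<le> l"
    and pf: "periodic_z a b l f"
    and bca: "\<And>z. f (a, z) = 0" and bcb: "\<And>z. f (b, z) = 0"
  shows "Re (integral (cbox (a,0) (b,l)) (\<lambda>q. cnj (f q) * Lap a b f q)) \<le> 0"
proof -
  have cf: "continuous_on (strip a b) f"
    and cyy: "continuous_on (strip a b) (Dy a b (Dy a b f))"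
    and czz: "continuous_on (strip a b) (Dz (Dz f))"
    and cy: "continuous_on (strip a b) (Dy a b f)"
    and cz: "continuous_on (strip a b) (Dz f)"
    by (simp_all add: smooth_cont smooth_Dy smooth_Dz f)
  let ?R = "cbox (a,0) (b,l)"
  have i1: "(\<lambda>q. Dy a b (Dy a b f) q * cnj (f q)) integrable_on ?R"
    by (rule integrable_continuous, rule cont_rect, intro continuous_intros cyy cf)
  have i2: "(\<lambda>q. Dz (Dz f) q * cnj (f q)) integrable_on ?R"
    by (rule integrable_continuous, rule cont_rect, intro continuous_intros czz cf)
  have "integral ?R (\<lambda>q. cnj (f q) * Lap a b f q)
      = integral ?R (\<lambda>q. Dy a b (Dy a b f) q * cnj (f q) + Dz (Dz f) q * cnj (f q))"
    by (rule integral_cong) (simp add: Lap_def algebra_simps)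
  also have "\<dots> = integral ?R (\<lambda>q. Dy a b (Dy a b f) q * cnj (f q)) + integral ?R (\<lambda>q. Dz (Dz f) q * cnj (f q))"
    by (rule integral_add[OF i1 i2])
  also have "\<dots> = - integral ?R (\<lambda>q. Dy a b f q * cnj (Dy a b f q)) - integral ?R (\<lambda>q. Dz f q * cnj (Dz f q))"
    by (simp only: ibp_y[OF smooth_Dy[OF f] f ab bca bcb, of l] ibp_z[OF smooth_Dz[OF f] f l per_Dz[OF f pf] pf]
        diff_conv_add_uminus)
  finally show ?thesis
    using re_int_nonneg[OF cy, of l] re_int_nonneg[OF cz, of l] by simp
qed

lemma per_nat: "periodic_z a b l f \<Longrightarrow> y \<in> {a..b} \<Longrightarrow> f (y, z + real n * l) = f (y, z)"
proof (induction n arbitrary: z)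
  case 0 then show ?case by simp
next
  case (Suc n)
  have "f (y, z + real (Suc n) * l) = f (y, (z + real n * l) + l)" by (simp add: algebra_simps)
  also have "\<dots> = f (y, z + real n * l)" using Suc.prems by (simp add: periodic_z_def)
  finally show ?case using Suc by simp
qed

lemma per_int: "periodic_z a b l f \<Longrightarrow> y \<in> {a..b} \<Longrightarrow> f (y, z + real_of_int n * l) = f (y, z)"
proof (cases "n \<ge> 0")
  case True
  assume "periodic_z a b l f" "y \<in> {a..b}"
  then show ?thesis using per_nat[of a b l f y z "nat n"] True by simp
next
  case False
  assume p: "periodic_z a b l f" "y \<in> {a..b}"
  have "f (y, (z + real_of_int n * l) + real (nat (-n)) * l) = f (y, z + real_of_int n * l)"
    by (rule per_nat[OF p])
  then show ?thesis using False by simp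
qed

lemma shift_bounds: "(l::real) > 0 \<Longrightarrow> z - of_int \<lfloor>z / l\<rfloor> * l \<in> {0..l}"
proof -
  assume l: "l > 0"
  have h1: "of_int \<lfloor>z / l\<rfloor> \<le> z / l" and h2: "z / l < of_int \<lfloor>z / l\<rfloor> + 1" by linarith+
  have e: "(z / l) * l = z" using l by simp
  have "of_int \<lfloor>z / l\<rfloor> * l \<le> z" "z < (of_int \<lfloor>z / l\<rfloor> + 1) * l"
    using mult_right_mono[OF h1 less_imp_le[OF l]] mult_strict_right_mono[OF h2 l] e by simp_all
  then have "of_int \<lfloor>z / l\<rfloor> * l \<le> z" "z < of_int \<lfloor>z / l\<rfloor> * l + l"
    by (auto simp: distrib_right)
  then show ?thesis by simp
qed

lemma shift_eq: "periodic_z a b l f \<Longrightarrow> y \<in> {a..b} \<Longrightarrow> f (y, z - of_int \<lfloor>z / l\<rfloor> * l) = f (y, z)"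
  using per_int[of a b l f y "z - of_int \<lfloor>z / l\<rfloor> * l" "\<lfloor>z / l\<rfloor>"] by simp

lemma bdd_per:
  fixes h :: "real \<times> real \<Rightarrow> real"
  assumes c: "continuous_on (strip a b) h" and p: "periodic_z a b l h" and l: "l > 0"
  shows "bdd_above ((\<lambda>q. \<bar>h q\<bar>) ` strip a b)"
proof -
  have "compact ((\<lambda>q. \<bar>h q\<bar>) ` cbox (a,0) (b,l))"
    by (rule compact_continuous_image, intro continuous_intros cont_rect[OF c]) simp
  then have bd: "bdd_above ((\<lambda>q. \<bar>h q\<bar>) ` cbox (a,0) (b,l))"
    by (simp add: bounded_imp_bdd_above compact_imp_bounded)
  have "(\<lambda>q. \<bar>h q\<bar>) ` strip a b \<subseteq> (\<lambda>q. \<bar>h q\<bar>) ` cbox (a,0) (b,l)"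
  proof
    fix x assume "x \<in> (\<lambda>q. \<bar>h q\<bar>) ` strip a b"
    then obtain y z where yz: "y \<in> {a..b}" "x = \<bar>h (y, z)\<bar>" by (auto simp: strip_def)
    then have "x = \<bar>h (y, z - of_int \<lfloor>z / l\<rfloor> * l)\<bar>" using shift_eq[OF p] by simp
    moreover have "(y, z - of_int \<lfloor>z / l\<rfloor> * l) \<in> cbox (a,0) (b,l)"
      using yz shift_bounds[OF l, of z] by (simp add: cbox_Pair_iff[symmetric] cbox_interval)
    ultimately show "x \<in> (\<lambda>q. \<bar>h q\<bar>) ` cbox (a,0) (b,l)" by blast
  qed
  then show ?thesis by (rule bdd_above_mono[OF bd])
qed



lemma re_quad: "Re (cnj u * (A * u)) = Re A * (cmod u)^2"
  unfolding cmod_power2 by (simp add: algebra_simps power2_eq_square)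

lemma re_visc: "Re (cnj u * (complex_of_real e * (L - complex_of_real K * u)))
   = e * (Re (cnj u * L) - K * (cmod u)^2)"
  unfolding cmod_power2 by (simp add: algebra_simps power2_eq_square)

lemma key_alg:
  fixes A X P1 P2 P3 L1 L2 L3 u v w :: complex and e K :: real
  assumes h1: "A * u + X1 + X2 = P1 + of_real e * (L1 - of_real K * u)"
    and h2: "A * v = P2 + of_real e * (L2 - of_real K * v)"
    and h3: "A * w = P3 + of_real e * (L3 - of_real K * w)"
  shows "Re A * ((cmod u)^2 + (cmod v)^2 + (cmod w)^2) + Re (cnj u * (X1 + X2))
       = Re (cnj u * P1 + cnj v * P2 + cnj w * P3)
         + e * (Re (cnj u * L1 + cnj v * L2 + cnj w * L3) - K * ((cmod u)^2 + (cmod v)^2 + (cmod w)^2))"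
proof -
  have r1: "Re (cnj u * (A * u)) + Re (cnj u * (X1 + X2)) = Re (cnj u * P1) + Re (cnj u * (of_real e * (L1 - of_real K * u)))"
    using arg_cong[OF h1, of "\<lambda>t. Re (cnj u * t)"] by (simp add: distrib_left add.assoc)
  have r2: "Re (cnj v * (A * v)) = Re (cnj v * P2) + Re (cnj v * (of_real e * (L2 - of_real K * v)))"
    using arg_cong[OF h2, of "\<lambda>t. Re (cnj v * t)"] by (simp add: distrib_left)
  have r3: "Re (cnj w * (A * w)) = Re (cnj w * P3) + Re (cnj w * (of_real e * (L3 - of_real K * w)))"
    using arg_cong[OF h3, of "\<lambda>t. Re (cnj w * t)"] by (simp add: distrib_left)
  have s1: "Re (cnj u * P1 + cnj v * P2 + cnj w * P3) = Re (cnj u * P1) + Re (cnj v * P2) + Re (cnj w * P3)"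
    by (simp only: plus_complex.sel)
  have s2: "Re (cnj u * L1 + cnj v * L2 + cnj w * L3) = Re (cnj u * L1) + Re (cnj v * L2) + Re (cnj w * L3)"
    by (simp only: plus_complex.sel)
  show ?thesis unfolding s1 s2 using r1 r2 r3 unfolding re_quad re_visc
    by (simp only: ring_distribs)
qed

lemma cross_bound:
  fixes x y z g s t :: real
  assumes "0 \<le> x" "0 \<le> y" "0 \<le> z" "\<bar>s\<bar> \<le> g" "\<bar>t\<bar> \<le> g"
  shows "x * (y * \<bar>s\<bar> + z * \<bar>t\<bar>) \<le> g * (x^2 + y^2 + z^2)"
proof -
  have "x * (y * \<bar>s\<bar> + z * \<bar>t\<bar>) \<le> x * (y * g + z * g)"
    using assms by (intro mult_left_mono add_mono mult_left_mono) auto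
  also have "\<dots> = g * (x * y + x * z)" by (simp add: algebra_simps)
  also have "\<dots> \<le> g * (x^2 + y^2 + z^2)"
  proof (rule mult_left_mono)
    have "0 \<le> (x - y)^2" "0 \<le> (x - z)^2" by simp_all
    then have e1: "2 * (x * y) \<le> x * x + y * y" and e2: "2 * (x * z) \<le> x * x + z * z"
      by (simp_all add: power2_eq_square algebra_simps)
    have "0 \<le> y * y" "0 \<le> z * z" by simp_all
    then show "x * y + x * z \<le> x^2 + y^2 + z^2" using e1 e2 unfolding power2_eq_square by linarith
    show "0 \<le> g" using assms by linarith
  qed
  finally show ?thesis .
qed

lemma cont_Lap: "smooth_strip a b f \<Longrightarrow> continuous_on (strip a b) (Lap a b f)"
  unfolding Lap_def by (intro continuous_intros smooth_cont smooth_Dy smooth_Dz)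

lemma min_le_sq: "(k::real) > 0 \<Longrightarrow> min k (k^3) \<le> k^2"
proof (cases "k \<le> 1")
  case True
  assume "k > 0"
  then have "k * k^2 \<le> 1 * k^2" using True by (intro mult_right_mono) auto
  then show ?thesis by (simp add: power3_eq_cube power2_eq_square min_def)
next
  case False
  then have "k * 1 \<le> k * k" by (intro mult_left_mono) auto
  then show ?thesis by (simp add: power2_eq_square min_def)
qed



theorem theorem4:
  fixes a b l3 R k :: real and c :: complex
    and U :: "real \<times> real \<Rightarrow> real"
    and u v w p :: "real \<times> real \<Rightarrow> complex"
  assumes ab: "a < b" and l3: "l3 > 0" and R: "R > 0"
    and U_smooth: "smooth_strip a b U" and U_per: "periodic_z a b l3 U"
    and k: "k > 0"
    and smooth: "smooth_strip a b u" "smooth_strip a b v" "smooth_strip a b w" "smooth_strip a b p"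
    and per: "periodic_z a b l3 u" "periodic_z a b l3 v" "periodic_z a b l3 w" "periodic_z a b l3 p"
    and nontriv: "\<exists>q\<in>strip a b. u q \<noteq> 0 \<or> v q \<noteq> 0 \<or> w q \<noteq> 0"
    and eq1: "\<forall>q\<in>strip a b.
       \<i> * k * (of_real (U q) - c) * u q + v q * of_real (Dy a b U q) + w q * of_real (Dz U q)
       = - \<i> * k * p q + of_real (1 / R) * (Lap a b u q - of_real (k^2) * u q)"
    and eq2: "\<forall>q\<in>strip a b.
       \<i> * k * (of_real (U q) - c) * v q
       = - Dy a b p q + of_real (1 / R) * (Lap a b v q - of_real (k^2) * v q)"
    and eq3: "\<forall>q\<in>strip a b.
       \<i> * k * (of_real (U q) - c) * w q
       = - Dz p q + of_real (1 / R) * (Lap a b w q - of_real (k^2) * w q)"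
    and div: "\<forall>q\<in>strip a b. \<i> * k * u q + Dy a b v q + Dz w q = 0"
    and bc: "\<forall>z. u (a, z) = 0 \<and> v (a, z) = 0 \<and> w (a, z) = 0 \<and>
                 u (b, z) = 0 \<and> v (b, z) = 0 \<and> w (b, z) = 0"
    and small: "R * max (SUP q\<in>strip a b. \<bar>Dy a b U q\<bar>) (SUP q\<in>strip a b. \<bar>Dz U q\<bar>)
                 < min k (k^3)"
  shows "Im c < 0"
proof -
  let ?R = "cbox (a,0) (b,l3)"
  have sub: "?R \<subseteq> strip a b" by (rule rect_sub)
  have abl: "a \<le> b" using ab by simp
  have l3': "0 \<le> l3" using l3 by simp
  note su = smooth(1) and sv = smooth(2) and sw = smooth(3) and sp = smooth(4)
  note peru = per(1) and perv = per(2) and perw = per(3) and perp = per(4)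
  have cu: "continuous_on (strip a b) u" and cv: "continuous_on (strip a b) v"
    and cw: "continuous_on (strip a b) w" and cp: "continuous_on (strip a b) p"
    by (simp_all add: smooth_cont smooth)
  have cUy: "continuous_on (strip a b) (Dy a b U)" and cUz: "continuous_on (strip a b) (Dz U)"
    by (simp_all add: smooth_cont smooth_Dy smooth_Dz U_smooth)
  have cpy: "continuous_on (strip a b) (Dy a b p)" and cpz: "continuous_on (strip a b) (Dz p)"
    by (simp_all add: smooth_cont smooth_Dy smooth_Dz sp)
  have cvy: "continuous_on (strip a b) (Dy a b v)" and cwz: "continuous_on (strip a b) (Dz w)"
    by (simp_all add: smooth_cont smooth_Dy smooth_Dz sv sw)
  have cLu: "continuous_on (strip a b) (Lap a b u)" and cLv: "continuous_on (strip a b) (Lap a b v)"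
    and cLw: "continuous_on (strip a b) (Lap a b w)"
    by (simp_all add: cont_Lap smooth)
  have bcu: "\<And>z. u (a, z) = 0" "\<And>z. u (b, z) = 0" using bc by auto
  have bcv: "\<And>z. v (a, z) = 0" "\<And>z. v (b, z) = 0" using bc by auto
  have bcw: "\<And>z. w (a, z) = 0" "\<And>z. w (b, z) = 0" using bc by auto

  define g where "g = max (SUP q\<in>strip a b. \<bar>Dy a b U q\<bar>) (SUP q\<in>strip a b. \<bar>Dz U q\<bar>)"
  have small': "R * g < k^2" using small min_le_sq[OF k] unfolding g_def by linarith
  have bddy: "bdd_above ((\<lambda>q. \<bar>Dy a b U q\<bar>) ` strip a b)"
    by (rule bdd_per[OF cUy per_Dy[OF ab U_smooth U_per] l3])
  have bddz: "bdd_above ((\<lambda>q. \<bar>Dz U q\<bar>) ` strip a b)"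
    by (rule bdd_per[OF cUz per_Dz[OF U_smooth U_per] l3])
  have gy: "\<bar>Dy a b U q\<bar> \<le> g" if "q \<in> strip a b" for q
    using cSUP_upper[OF that bddy] unfolding g_def by linarith
  have gz: "\<bar>Dz U q\<bar> \<le> g" if "q \<in> strip a b" for q
    using cSUP_upper[OF that bddz] unfolding g_def by linarith

  define Dr where "Dr = (\<lambda>q. (cmod (u q))^2 + (cmod (v q))^2 + (cmod (w q))^2)"
  define C where "C = (\<lambda>q. Re (cnj (u q) * (v q * of_real (Dy a b U q) + w q * of_real (Dz U q))))"
  define P where "P = (\<lambda>q. cnj (u q) * (- \<i> * k * p q) + cnj (v q) * (- Dy a b p q) + cnj (w q) * (- Dz p q))"
  define L where "L = (\<lambda>q. cnj (u q) * Lap a b u q + cnj (v q) * Lap a b v q + cnj (w q) * Lap a b w q)"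

  have pw: "k * Im c * Dr q + C q = Re (P q) + (1 / R) * (Re (L q) - k^2 * Dr q)"
    if q: "q \<in> strip a b" for q
  proof -
    have ra: "Re (\<i> * k * (of_real (U q) - c)) = k * Im c" by simp
    from key_alg[OF eq1[rule_format, OF q] eq2[rule_format, OF q] eq3[rule_format, OF q]]
    show ?thesis unfolding Dr_def C_def P_def L_def ra .
  qed

  have cDr: "continuous_on (strip a b) Dr" unfolding Dr_def by (intro continuous_intros cu cv cw)
  have cC: "continuous_on (strip a b) C" unfolding C_def by (intro continuous_intros cu cv cw cUy cUz)
  have cP: "continuous_on (strip a b) P" unfolding P_def by (intro continuous_intros cu cv cw cp cpy cpz)
  have cL: "continuous_on (strip a b) L" unfolding L_def by (intro continuous_intros cu cv cw cLu cLv cLw)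
  have iDr: "Dr integrable_on ?R" by (rule integrable_continuous[OF cont_rect[OF cDr]])
  have iC: "C integrable_on ?R" by (rule integrable_continuous[OF cont_rect[OF cC]])
  have iP: "P integrable_on ?R" by (rule integrable_continuous[OF cont_rect[OF cP]])
  have iL: "L integrable_on ?R" by (rule integrable_continuous[OF cont_rect[OF cL]])
  have iReP: "(\<lambda>q. Re (P q)) integrable_on ?R"
    by (rule integrable_continuous[OF cont_rect], intro continuous_intros cP)
  have iReL: "(\<lambda>q. Re (L q)) integrable_on ?R"
    by (rule integrable_continuous[OF cont_rect], intro continuous_intros cL)

  define ID where "ID = integral ?R Dr"
  define IC where "IC = integral ?R C"
  define IP where "IP = integral ?R (\<lambda>q. Re (P q))"
  define IL where "IL = integral ?R (\<lambda>q. Re (L q))"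

  have main: "k * Im c * ID + IC = IP + (1 / R) * (IL - k^2 * ID)"
  proof -
    have "integral ?R (\<lambda>q. k * Im c * Dr q + C q)
        = integral ?R (\<lambda>q. Re (P q) + (1 / R) * (Re (L q) - k^2 * Dr q))"
      by (rule integral_cong, rule pw) (use sub in blast)
    moreover have "integral ?R (\<lambda>q. k * Im c * Dr q + C q) = k * Im c * ID + IC"
    proof -
      have "integral ?R (\<lambda>q. k * Im c * Dr q + C q) = integral ?R (\<lambda>q. k * Im c * Dr q) + integral ?R C"
        by (rule integral_add[OF integrable_on_mult_right[OF iDr] iC])
      then show ?thesis unfolding ID_def IC_def integral_mult_right .
    qed
    moreover have "integral ?R (\<lambda>q. Re (P q) + (1 / R) * (Re (L q) - k^2 * Dr q))
        = IP + (1 / R) * (IL - k^2 * ID)"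
    proof -
      have a1: "(\<lambda>q. Re (L q) - k^2 * Dr q) integrable_on ?R"
        by (rule integrable_diff[OF iReL integrable_on_mult_right[OF iDr]])
      have "integral ?R (\<lambda>q. Re (P q) + (1 / R) * (Re (L q) - k^2 * Dr q))
          = integral ?R (\<lambda>q. Re (P q)) + integral ?R (\<lambda>q. (1 / R) * (Re (L q) - k^2 * Dr q))"
        by (rule integral_add[OF iReP integrable_on_mult_right[OF a1]])
      also have "integral ?R (\<lambda>q. (1 / R) * (Re (L q) - k^2 * Dr q)) = (1 / R) * integral ?R (\<lambda>q. Re (L q) - k^2 * Dr q)"
        by (rule integral_mult_right)
      also have "integral ?R (\<lambda>q. Re (L q) - k^2 * Dr q) = integral ?R (\<lambda>q. Re (L q)) - integral ?R (\<lambda>q. k^2 * Dr q)"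
        by (rule integral_diff[OF iReL integrable_on_mult_right[OF iDr]])
      also have "integral ?R (\<lambda>q. k^2 * Dr q) = k^2 * integral ?R Dr"
        by (rule integral_mult_right)
      finally show ?thesis unfolding ID_def IP_def IL_def .
    qed
    ultimately show ?thesis by simp
  qed

  have IP0: "IP = 0"
  proof -
    have i1: "(\<lambda>q. cnj (u q) * (- \<i> * k * p q)) integrable_on ?R"
      by (rule integrable_continuous[OF cont_rect], intro continuous_intros cu cp)
    have i2: "(\<lambda>q. Dy a b p q * cnj (v q)) integrable_on ?R"
      by (rule integrable_continuous[OF cont_rect], intro continuous_intros cv cpy)
    have i3: "(\<lambda>q. Dz p q * cnj (w q)) integrable_on ?R"
      by (rule integrable_continuous[OF cont_rect], intro continuous_intros cw cpz)
    have j2: "(\<lambda>q. p q * cnj (Dy a b v q)) integrable_on ?R"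
      by (rule integrable_continuous[OF cont_rect], intro continuous_intros cp cvy)
    have j3: "(\<lambda>q. p q * cnj (Dz w q)) integrable_on ?R"
      by (rule integrable_continuous[OF cont_rect], intro continuous_intros cp cwz)
    have "integral ?R P = integral ?R (\<lambda>q. cnj (u q) * (- \<i> * k * p q) - Dy a b p q * cnj (v q) - Dz p q * cnj (w q))"
      by (rule integral_cong) (simp add: P_def mult.commute)
    also have "\<dots> = integral ?R (\<lambda>q. cnj (u q) * (- \<i> * k * p q)) - integral ?R (\<lambda>q. Dy a b p q * cnj (v q))
         - integral ?R (\<lambda>q. Dz p q * cnj (w q))"
      by (simp only: integral_diff[OF integrable_diff[OF i1 i2] i3] integral_diff[OF i1 i2])
    also have "\<dots> = integral ?R (\<lambda>q. cnj (u q) * (- \<i> * k * p q)) + integral ?R (\<lambda>q. p q * cnj (Dy a b v q))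
         + integral ?R (\<lambda>q. p q * cnj (Dz w q))"
      by (simp only: ibp_y[OF sp sv abl bcv, of l3] ibp_z[OF sp sw l3' perp perw] diff_minus_eq_add)
    also have "\<dots> = integral ?R (\<lambda>q. cnj (u q) * (- \<i> * k * p q) + p q * cnj (Dy a b v q) + p q * cnj (Dz w q))"
      by (simp only: integral_add[OF integrable_add[OF i1 j2] j3] integral_add[OF i1 j2])
    also have "\<dots> = integral ?R (\<lambda>q. 0)"
    proof (rule integral_cong)
      fix q assume "q \<in> ?R"
      then have q: "q \<in> strip a b" using sub by blast
      have "cnj (u q) * (- \<i> * k * p q) + p q * cnj (Dy a b v q) + p q * cnj (Dz w q)
          = p q * cnj (\<i> * k * u q + Dy a b v q + Dz w q)"
        by (simp add: algebra_simps)
      also have "\<dots> = 0" using div q by simp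
      finally show "cnj (u q) * (- \<i> * k * p q) + p q * cnj (Dy a b v q) + p q * cnj (Dz w q) = 0" .
    qed
    finally have "integral ?R P = 0" by simp
    then show ?thesis unfolding IP_def Re_integral[OF iP, symmetric] by simp
  qed

  have ILn: "IL \<le> 0"
  proof -
    have k1: "(\<lambda>q. cnj (u q) * Lap a b u q) integrable_on ?R"
      by (rule integrable_continuous[OF cont_rect], intro continuous_intros cu cLu)
    have k2: "(\<lambda>q. cnj (v q) * Lap a b v q) integrable_on ?R"
      by (rule integrable_continuous[OF cont_rect], intro continuous_intros cv cLv)
    have k3: "(\<lambda>q. cnj (w q) * Lap a b w q) integrable_on ?R"
      by (rule integrable_continuous[OF cont_rect], intro continuous_intros cw cLw)
    have "integral ?R L = integral ?R (\<lambda>q. cnj (u q) * Lap a b u q) + integral ?R (\<lambda>q. cnj (v q) * Lap a b v q)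
        + integral ?R (\<lambda>q. cnj (w q) * Lap a b w q)"
      unfolding L_def by (simp only: integral_add[OF integrable_add[OF k1 k2] k3] integral_add[OF k1 k2])
    then have "Re (integral ?R L) \<le> 0"
      using lap_lemma[OF su abl l3' peru bcu] lap_lemma[OF sv abl l3' perv bcv]
        lap_lemma[OF sw abl l3' perw bcw] by simp
    then show ?thesis unfolding IL_def Re_integral[OF iL, symmetric] .
  qed

  have ICb: "- g * ID \<le> IC"
  proof -
    have "integral ?R (\<lambda>q. - g * Dr q) \<le> integral ?R C"
    proof (rule integral_le)
      show "(\<lambda>q. - g * Dr q) integrable_on ?R" using iDr by (rule integrable_on_mult_right)
      show "C integrable_on ?R" by (rule iC)
      fix q assume "q \<in> ?R"
      then have q: "q \<in> strip a b" using sub by blast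
      have "\<bar>C q\<bar> \<le> cmod (cnj (u q) * (v q * of_real (Dy a b U q) + w q * of_real (Dz U q)))"
        unfolding C_def by (rule abs_Re_le_cmod)
      also have "\<dots> = cmod (u q) * cmod (v q * of_real (Dy a b U q) + w q * of_real (Dz U q))"
        by (simp add: norm_mult)
      also have "\<dots> \<le> cmod (u q) * (cmod (v q) * \<bar>Dy a b U q\<bar> + cmod (w q) * \<bar>Dz U q\<bar>)"
      proof (rule mult_left_mono)
        have "cmod (v q * of_real (Dy a b U q) + w q * of_real (Dz U q))
            \<le> cmod (v q * of_real (Dy a b U q)) + cmod (w q * of_real (Dz U q))"
          by (rule norm_triangle_ineq)
        then show "cmod (v q * of_real (Dy a b U q) + w q * of_real (Dz U q))
            \<le> cmod (v q) * \<bar>Dy a b U q\<bar> + cmod (w q) * \<bar>Dz U q\<bar>"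
          by (simp add: norm_mult)
      qed simp
      also have "\<dots> \<le> g * Dr q"
        unfolding Dr_def by (rule cross_bound) (auto intro: gy gz q)
      finally show "- g * Dr q \<le> C q" by linarith
    qed
    then show ?thesis unfolding ID_def IC_def by simp
  qed

  have IDpos: "ID > 0"
  proof -
    have Drnn: "\<And>x. 0 \<le> Dr x" unfolding Dr_def by simp
    have "0 \<le> ID" unfolding ID_def by (rule integral_nonneg[OF iDr]) (simp add: Drnn)
    moreover have "ID \<noteq> 0"
    proof
      assume "ID = 0"
      have bne: "box (a,0) (b,l3) \<noteq> {}"
        using ab l3 by (auto simp: box_ne_empty Basis_prod_def)
      have all0: "\<forall>x\<in>?R. Dr x = 0"
        using integral_cbox_eq_0_iff[OF cont_rect[OF cDr] bne Drnn] \<open>ID = 0\<close> unfolding ID_def by simp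
      obtain y z where yz: "(y, z) \<in> strip a b" "u (y,z) \<noteq> 0 \<or> v (y,z) \<noteq> 0 \<or> w (y,z) \<noteq> 0"
        using nontriv by auto
      have y: "y \<in> {a..b}" using yz by (simp add: strip_def)
      define z' where "z' = z - of_int \<lfloor>z / l3\<rfloor> * l3"
      have "(y, z') \<in> ?R"
        using y shift_bounds[OF l3, of z] by (simp add: z'_def cbox_Pair_iff[symmetric] cbox_interval)
      then have "Dr (y, z') = 0" using all0 by blast
      moreover have "u (y, z') = u (y, z)" "v (y, z') = v (y, z)" "w (y, z') = w (y, z)"
        unfolding z'_def using shift_eq[OF peru y] shift_eq[OF perv y] shift_eq[OF perw y] by auto
      ultimately have "u (y,z) = 0 \<and> v (y,z) = 0 \<and> w (y,z) = 0"
        unfolding Dr_def by (simp add: add_nonneg_eq_0_iff)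
      then show False using yz by blast
    qed
    ultimately show ?thesis by simp
  qed

  have m1: "k * Im c * ID + IC = (1 / R) * IL - (1 / R) * (k^2 * ID)"
    using main IP0 by (simp add: right_diff_distrib)
  have m2: "(1 / R) * IL \<le> 0" using ILn R by (simp add: divide_nonpos_pos)
  have m3: "(1 / R) * (k^2 * ID) = (k^2 / R) * ID" by simp
  have m4: "(g - k^2 / R) * ID = g * ID - (k^2 / R) * ID" by (rule left_diff_distrib)
  have "k * Im c * ID \<le> (g - k^2 / R) * ID"
    using m1 m2 m3 m4 ICb by linarith
  then have "k * Im c \<le> g - k^2 / R" using IDpos by (rule mult_right_le_imp_le)
  moreover have "g < k^2 / R" using small' R by (simp add: pos_less_divide_eq mult.commute)
  ultimately have "k * Im c < 0" by linarith
  then show ?thesis using k by (simp add: mult_less_0_iff)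
qed


end
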